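(* Let $M\ge 1$ be an integer and let $H>0$, $D>0$, $x\in\mathbb{R}$, $\beta_0>0$, $\sigma^2>0$, $P_{\max}>0$, $\tilde{\Gamma}>0$, $\lambda>0$. Let $\bm{a}_u=\bm{a}(x,\bm{u})\in\mathbb{C}^M$ and $\bm{a}_v=\bm{a}(x,\bm{v})\in\mathbb{C}^M$ be the transmit array response vectors toward the user and the target, let $\bm{h}_c=\sqrt{\tfrac{\beta_0}{x^2+H^2}}\,e^{j\phi}\,\bm{a}_u$ for a real phase $\phi$, and consider the problem $$\max_{\bm{w}\in\mathbb{C}^M}\ \frac{|\bm{h}_c^H\bm{w}|^2}{\sigma^2}\quad\text{s.t.}\quad \frac{|\bm{a}_v^H\bm{w}|^2}{(D-x)^2+H^2}\ge\tilde{\Gamma},\qquad \|\bm{w}\|^2\le P_{\max}.$$ Assume this problem is feasible, i.e. $\frac{MP_{\max}}{(D-x)^2+H^2}\ge\tilde{\Gamma}$. Set $\gamma_0=\beta_0/\sigma^2$ and $\rho=\frac{|\bm{a}_u^H\bm{a}_v|}{\|\bm{a}_u\|\,\|\bm{a}_v\|}$. Then the optimal value $\gamma^*$ of the problem is $$\gamma^*=\begin{cases}\dfrac{\gamma_0 P_{\max}M}{x^2+H^2}, & \text{if } \dfrac{MP_{\max}\rho^2}{(D-x)^2+H^2}\ge\tilde{\Gamma},\\[2ex] g(x), & \text{otherwise,}\end{cases}$$ where $$g(x)=\frac{\gamma_0\big((D-x)^2+H^2\big)\left(\rho\sqrt{\tilde{\Gamma}}+\sqrt{1-\rho^2}\s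qrt{\dfrac{MP_{\max}}{(D-x)^2+H^2}-\tilde{\Gamma}}\right)^2}{x^2+H^2}.$$
   Context: Setting: a UAV with a uniform linear array of $M$ antennas (half-wavelength spacing $d=\lambda/2$) is at horizontal position $x$ and altitude $H$; a single-antenna user is at ground point $\bm{u}=(0,0)$ and a sensing target at ground point $\bm{v}=(D,0)$. The array response vector toward a ground point $\bm{p}$ is $\bm{a}(x,\bm{p})=[1,e^{j\pi\sin\theta},\dots,e^{j\pi(M-1)\sin\theta}]^T$, where $\theta$ is the elevation angle of the path from the UAV to $\bm{p}$; for the user $\sin\theta=H/\sqrt{x^2+H^2}$ and for the target $\sin\theta=H/\sqrt{(D-x)^2+H^2}$. Thus $\|\bm{a}_u\|^2=\|\bm{a}_v\|^2=M$. The channel to the user is line-of-sight with power gain $\beta_0/(x^2+H^2)$ ($\beta_0$ = reference channel power at 1 m), with the phase factor $e^{-j2\pi\sqrt{x^2+H^2}/\lambda}$. The objective is the user SNR with precoder $\bm{w}$ and noise power $\sigma^2$; the first constraint requires the transmit beam pattern gain $|\bm{a}_v^H\bm{w}|^2$ toward the target to be at least $((D-x)^2+H^2)\tilde{\Gamma}$; the second is a transmit power budget. *)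

theory Defs
  imports "HOL-Analysis.Analysis"
begin

text \<open>Vectors in C^M are represented as functions nat => complex; only the
entries with index i < M are relevant.\<close>

definition arr_resp :: "real \<Rightarrow> nat \<Rightarrow> complex" where
  "arr_resp s = (\<lambda>i. exp (\<i> * of_real (pi * real i * s)))"

text \<open>Array response vector a(x,p) of the UAV at horizontal position x, altitude H,
towards the ground point (p,0): sin theta = H / sqrt((p - x)^2 + H^2).\<close>
definition arr_vec :: "real \<Rightarrow> real \<Rightarrow> real \<Rightarrow> nat \<Rightarrow> complex" where
  "arr_vec H x p = arr_resp (H / sqrt ((p - x)\<^sup>2 + H\<^sup>2))"

definition herm :: "nat \<Rightarrow> (nat \<Rightarrow> complex) \<Rightarrow> (nat \<Rightarrow> complex) \<Rightarrow> complex" where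
  "herm M a w = (\<Sum>i<M. cnj (a i) * w i)"

definition vnorm :: "nat \<Rightarrow> (nat \<Rightarrow> complex) \<Rightarrow> real" where
  "vnorm M w = sqrt (\<Sum>i<M. (cmod (w i))\<^sup>2)"

end

theory Submission
  imports Defs
begin

lemma herm_lin_right: "herm M a (\<lambda>i. \<alpha> * w1 i + \<beta> * w2 i) = \<alpha> * herm M a w1 + \<beta> * herm M a w2"
  by (simp add: herm_def sum.distrib sum_distrib_left algebra_simps)

lemma herm_lin_left: "herm M (\<lambda>i. \<alpha> * w1 i + \<beta> * w2 i) a = cnj \<alpha> * herm M w1 a + cnj \<beta> * herm M w2 a"
  by (simp add: herm_def sum.distrib sum_distrib_left algebra_simps)

lemma herm_cnj: "herm M b a = cnj (herm M a b)"
  by (simp add: herm_def mult.commute)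

lemma vnorm_sq: "(vnorm M w)\<^sup>2 = (\<Sum>i<M. (cmod (w i))\<^sup>2)"
  by (simp add: vnorm_def sum_nonneg)

lemma herm_self: "herm M w w = of_real ((vnorm M w)\<^sup>2)"
proof -
  have "herm M w w = (\<Sum>i<M. of_real ((cmod (w i))\<^sup>2))"
    unfolding herm_def by (intro sum.cong) (simp_all only: complex_norm_square mult.commute)
  also have "\<dots> = of_real ((vnorm M w)\<^sup>2)" by (simp only: vnorm_sq of_real_sum)
  finally show ?thesis .
qed

lemma herm_cs: "cmod (herm M a b) \<le> vnorm M a * vnorm M b"
proof -
  have "cmod (herm M a b) \<le> (\<Sum>i<M. cmod (cnj (a i) * b i))"
    unfolding herm_def by (rule norm_sum)
  also have "\<dots> = (\<Sum>i<M. \<bar>cmod (a i)\<bar> * \<bar>cmod (b i)\<bar>)" by (simp add: norm_mult)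
  also have "\<dots> \<le> L2_set (\<lambda>i. cmod (a i)) {..<M} * L2_set (\<lambda>i. cmod (b i)) {..<M}"
    by (rule L2_set_mult_ineq)
  finally show ?thesis by (simp add: L2_set_def vnorm_def)
qed

lemma herm_cs2: "(cmod (herm M a b))\<^sup>2 \<le> (vnorm M a)\<^sup>2 * (vnorm M b)\<^sup>2"
  using power_mono[OF herm_cs[of M a b] norm_ge_zero, of 2] by (simp add: power_mult_distrib)

lemma vnorm_nonneg: "vnorm M w \<ge> 0" by (simp add: vnorm_def sum_nonneg)

lemma twoD:
  fixes r q P G s :: real
  assumes "r \<ge> 0" "q \<ge> 0" "r\<^sup>2 + q\<^sup>2 = 1" "r\<^sup>2 * P < G" "G \<le> s\<^sup>2" "s\<^sup>2 \<le> P" "s \<ge> 0"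
  shows "r * s + q * sqrt (P - s\<^sup>2) \<le> r * sqrt G + q * sqrt (P - G)"
proof -
  define A where "A = sqrt G"
  define B where "B = sqrt (P - G)"
  define b where "b = sqrt (P - s\<^sup>2)"
  have P0: "P \<ge> 0" using assms(6) zero_le_power2[of s] by linarith
  have "r\<^sup>2 * P \<ge> 0" using P0 by simp
  hence G0: "G > 0" using assms(4) by linarith
  have A2: "A\<^sup>2 = G" "A > 0" using G0 by (auto simp: A_def)
  have PG: "P - G \<ge> 0" using assms(5,6) by linarith
  have Ps: "P - s\<^sup>2 \<ge> 0" using assms(6) by linarith
  have B2: "B\<^sup>2 = P - G" "B \<ge> 0" using PG by (simp_all add: B_def)
  have b2: "b\<^sup>2 = P - s\<^sup>2" "b \<ge> 0" using Ps by (simp_all add: b_def)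
  have "sqrt G \<le> sqrt (s\<^sup>2)" using assms(5) by (rule real_sqrt_le_mono)
  hence sA: "s \<ge> A" using assms(7) by (simp add: A_def)
  have bB: "b \<le> B" unfolding b_def B_def using assms(5) by simp
  have q2: "q\<^sup>2 = 1 - r\<^sup>2" using assms(3) by simp
  have e1: "r\<^sup>2 * B\<^sup>2 = r\<^sup>2 * P - r\<^sup>2 * G" using B2(1) by (simp add: right_diff_distrib)
  have e2: "q\<^sup>2 * A\<^sup>2 = G - r\<^sup>2 * G" using A2(1) q2 by (simp add: left_diff_distrib)
  have "r\<^sup>2 * B\<^sup>2 \<le> q\<^sup>2 * A\<^sup>2" unfolding e1 e2 using assms(4) by simp
  hence "(r * B)\<^sup>2 \<le> (q * A)\<^sup>2" by (simp only: power_mult_distrib)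
  hence rB: "r * B \<le> q * A"
    by (rule power2_le_imp_le) (use assms(1,2) A2 in simp)
  have k1: "r * b \<le> r * B" using bB assms(1) by (rule mult_left_mono)
  have k2: "q * A \<le> q * s" using sA assms(2) by (rule mult_left_mono)
  have key: "r * (B + b) \<le> q * (s + A)"
    using rB k1 k2 by (simp add: distrib_left)
  have eq1: "(s - A) * (s + A) = s\<^sup>2 - A\<^sup>2" by (simp add: power2_eq_square algebra_simps)
  have eq2: "(B - b) * (B + b) = B\<^sup>2 - b\<^sup>2" by (simp add: power2_eq_square algebra_simps)
  have eq: "(s - A) * (s + A) = (B - b) * (B + b)"
    unfolding eq1 eq2 A2(1) B2(1) b2(1) by simp
  have "r * (s - A) * (s + A) \<le> q * (B - b) * (s + A)"
  proof -
    have "r * (s - A) * (s + A) = r * ((s - A) * (s + A))" by (simp only: mult.assoc)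
    also have "\<dots> = r * ((B - b) * (B + b))" by (simp only: eq)
    also have "\<dots> = r * (B + b) * (B - b)" by (simp only: mult_ac)
    also have "\<dots> \<le> q * (s + A) * (B - b)" using key bB by (intro mult_right_mono) auto
    finally show ?thesis by (simp only: mult_ac)
  qed
  moreover have "s + A > 0" using A2 sA by simp
  ultimately have "r * (s - A) \<le> q * (B - b)" by (rule mult_right_le_imp_le)
  hence "r * s + q * b \<le> r * A + q * B" by (simp add: right_diff_distrib)
  thus ?thesis unfolding A_def B_def b_def .
qed


lemma herm_scale_right: "herm M a (\<lambda>i. \<alpha> * w i) = \<alpha> * herm M a w"
  by (simp add: herm_def sum_distrib_left algebra_simps)

lemma herm_scale_left: "herm M (\<lambda>i. \<alpha> * w i) a = cnj \<alpha> * herm M w a"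
  by (simp add: herm_def sum_distrib_left algebra_simps)

lemma herm_self_eq: "herm M w w = of_real r \<Longrightarrow> (vnorm M w)\<^sup>2 = r"
  by (metis herm_self of_real_eq_iff)

lemma abstract_opt:
  fixes u v :: "nat \<Rightarrow> complex" and N P G :: real
  assumes N: "N > 0" and un: "(vnorm M u)\<^sup>2 = N" and vn: "(vnorm M v)\<^sup>2 = N"
    and P: "P > 0" and G: "G > 0" and feas: "G \<le> N * P"
  defines "\<rho> \<equiv> cmod (herm M u v) / N"
  defines "V \<equiv> (if N * P * \<rho>\<^sup>2 \<ge> G then N * P
                else (\<rho> * sqrt G + sqrt (1 - \<rho>\<^sup>2) * sqrt (N * P - G))\<^sup>2)"
  shows "(\<forall>w. (cmod (herm M v w))\<^sup>2 \<ge> G \<and> (vnorm M w)\<^sup>2 \<le> P \<longrightarrow> (cmod (herm M u w))\<^sup>2 \<le> V)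
       \<and> (\<exists>w. (cmod (herm M v w))\<^sup>2 \<ge> G \<and> (vnorm M w)\<^sup>2 \<le> P \<and> (cmod (herm M u w))\<^sup>2 = V)"
proof -
  define c where "c = herm M v u"
  have uu: "herm M u u = of_real N" using herm_self[of M u] un by simp
  have vv: "herm M v v = of_real N" using herm_self[of M v] vn by simp
  have vnu: "vnorm M u = sqrt N" using un vnorm_nonneg[of M u] by (metis real_sqrt_unique)
  have vnv: "vnorm M v = sqrt N" using vn vnorm_nonneg[of M v] by (metis real_sqrt_unique)
  have cc: "cmod c = \<rho> * N" unfolding \<rho>_def c_def using N by (simp add: herm_cnj[of M v u])
  have rho0: "\<rho> \<ge> 0" unfolding \<rho>_def using N by simp
  have rho1: "\<rho> \<le> 1"
  proof -
    have "cmod (herm M u v) \<le> N" using herm_cs[of M u v] vnu vnv N by simp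
    thus ?thesis unfolding \<rho>_def using N by simp
  qed
  have cnjcc: "cnj c * c = of_real ((\<rho> * N)\<^sup>2)"
    using complex_norm_square[of c] cc by (simp add: mult.commute)
  define f where "f = (\<lambda>i. 1 * u i + (- (c / of_real N)) * v i)"
  have fR: "herm M a f = herm M a u - c / of_real N * herm M a v" for a
    unfolding f_def herm_lin_right by simp
  have fL: "herm M f a = herm M u a - cnj c / of_real N * herm M v a" for a
    unfolding f_def herm_lin_left by simp
  have vf: "herm M v f = 0" unfolding fR c_def[symmetric] vv using N by simp
  have fv: "herm M f v = 0" using vf herm_cnj[of M f v] by simp
  have fu: "herm M f u = of_real (N - \<rho>\<^sup>2 * N)"
  proof -
    have "herm M f u = of_real N - cnj c * c / of_real N"
      unfolding fL uu c_def[symmetric] by simp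
    also have "\<dots> = of_real (N - \<rho>\<^sup>2 * N)" unfolding cnjcc using N
      by (simp add: power2_eq_square field_simps)
    finally show ?thesis .
  qed
  have ff: "herm M f f = of_real (N - \<rho>\<^sup>2 * N)"
    using fu fv fR[of f] by simp
  have vnf: "(vnorm M f)\<^sup>2 = N - \<rho>\<^sup>2 * N" using herm_self_eq[OF ff] .
  have uw: "herm M u w = herm M f w + cnj c * herm M v w / of_real N" for w
  proof -
    show ?thesis unfolding fL by simp
  qed

  define V0 where "V0 = \<rho> * sqrt G + sqrt (1 - \<rho>\<^sup>2) * sqrt (N * P - G)"
  have r21: "\<rho>\<^sup>2 \<le> 1" using rho0 rho1 by (simp add: power_le_one)
  have V0nn: "V0 \<ge> 0" unfolding V0_def using rho0 r21 feas G by simp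
  have ub: "(cmod (herm M u w))\<^sup>2 \<le> V"
    if w1: "(cmod (herm M v w))\<^sup>2 \<ge> G" and w2: "(vnorm M w)\<^sup>2 \<le> P" for w
  proof (cases "N * P * \<rho>\<^sup>2 \<ge> G")
    case True
    have "(cmod (herm M u w))\<^sup>2 \<le> N * (vnorm M w)\<^sup>2" using herm_cs2[of M u w] un by simp
    also have "\<dots> \<le> N * P" using w2 N by simp
    finally show ?thesis unfolding V_def using True by simp
  next
    case False
    define z where "z = herm M v w"
    define s where "s = cmod z"
    define w' where "w' = (\<lambda>i. 1 * w i + (- (z / of_real N)) * v i)"
    have vw': "herm M v w' = 0" unfolding w'_def herm_lin_right z_def[symmetric] vv using N by simp
    have w'v: "herm M w' v = 0" using vw' herm_cnj[of M w' v] by simp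
    have w'w: "herm M w' w = of_real ((vnorm M w)\<^sup>2 - s\<^sup>2 / N)"
    proof -
      have "herm M w' w = of_real ((vnorm M w)\<^sup>2) - cnj z * z / of_real N"
        unfolding w'_def herm_lin_left herm_self z_def[symmetric] by simp
      moreover have "cnj z * z = of_real (s\<^sup>2)" unfolding s_def
        using complex_norm_square[of z] by (simp add: mult.commute)
      ultimately show ?thesis by simp
    qed
    have w'w': "herm M w' w' = of_real ((vnorm M w)\<^sup>2 - s\<^sup>2 / N)"
      using w'w w'v by (subst (2) w'_def) (simp only: herm_lin_right, simp)
    have vnw': "(vnorm M w')\<^sup>2 = (vnorm M w)\<^sup>2 - s\<^sup>2 / N" using herm_self_eq[OF w'w'] .
    have fw': "herm M f w' = herm M f w"
      using fv by (subst w'_def) (simp only: herm_lin_right, simp)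
    have s2: "s\<^sup>2 \<le> N * P"
    proof -
      have "s\<^sup>2 \<le> N * (vnorm M w)\<^sup>2" unfolding s_def z_def using herm_cs2[of M v w] vn by simp
      moreover have "N * (vnorm M w)\<^sup>2 \<le> N * P" using w2 N by simp
      ultimately show ?thesis by linarith
    qed
    have sG: "G \<le> s\<^sup>2" using w1 unfolding s_def z_def .
    have fbound: "(cmod (herm M f w'))\<^sup>2 \<le> (1 - \<rho>\<^sup>2) * (N * P - s\<^sup>2)"
    proof -
      have "(cmod (herm M f w'))\<^sup>2 \<le> (N - \<rho>\<^sup>2 * N) * ((vnorm M w)\<^sup>2 - s\<^sup>2 / N)"
        using herm_cs2[of M f w'] vnf vnw' by simp
      also have "\<dots> = (1 - \<rho>\<^sup>2) * (N * (vnorm M w)\<^sup>2 - s\<^sup>2)" using N by (simp add: field_simps)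
      also have "\<dots> \<le> (1 - \<rho>\<^sup>2) * (N * P - s\<^sup>2)"
        using rho0 rho1 w2 N by (intro mult_left_mono) (auto simp: power_le_one)
      finally show ?thesis .
    qed
    have fb: "cmod (herm M f w') \<le> sqrt (1 - \<rho>\<^sup>2) * sqrt (N * P - s\<^sup>2)"
      using real_le_rsqrt[OF fbound] by (simp add: real_sqrt_mult)
    have "cmod (herm M u w) \<le> cmod (herm M f w') + cmod (cnj c * z / of_real N)"
      unfolding uw[of w] fw' z_def by (rule norm_triangle_ineq)
    also have "cmod (cnj c * z / of_real N) = \<rho> * s"
      unfolding s_def using cc N by (simp add: norm_mult norm_divide)
    finally have "cmod (herm M u w) \<le> \<rho> * s + sqrt (1 - \<rho>\<^sup>2) * sqrt (N * P - s\<^sup>2)"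
      using fb by simp
    also have "\<dots> \<le> V0" unfolding V0_def
    proof (rule twoD)
      show "\<rho>\<^sup>2 + (sqrt (1 - \<rho>\<^sup>2))\<^sup>2 = 1" using r21 by simp
      show "\<rho>\<^sup>2 * (N * P) < G" using False by (simp add: mult.commute)
    qed (use rho0 r21 sG s2 s_def in auto)
    finally have "cmod (herm M u w) \<le> V0" .
    hence "(cmod (herm M u w))\<^sup>2 \<le> V0\<^sup>2" by (simp add: power_mono)
    thus ?thesis unfolding V_def V0_def[symmetric] using False by simp
  qed

  have att: "\<exists>w. (cmod (herm M v w))\<^sup>2 \<ge> G \<and> (vnorm M w)\<^sup>2 \<le> P \<and> (cmod (herm M u w))\<^sup>2 = V"
  proof (cases "N * P * \<rho>\<^sup>2 \<ge> G")
    case True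
    define k where "k = sqrt (P / N)"
    have k2: "k\<^sup>2 = P / N" unfolding k_def using P N by simp
    define w where "w = (\<lambda>i. of_real k * u i)"
    have "herm M v w = of_real k * c" unfolding w_def herm_scale_right c_def ..
    hence "(cmod (herm M v w))\<^sup>2 = k\<^sup>2 * (\<rho> * N)\<^sup>2" using cc by (simp add: norm_mult power_mult_distrib)
    also have "\<dots> = N * P * \<rho>\<^sup>2" unfolding k2 using N by (simp add: power2_eq_square field_simps)
    finally have c1: "(cmod (herm M v w))\<^sup>2 \<ge> G" using True by simp
    have "herm M w w = of_real (k\<^sup>2 * N)" unfolding w_def herm_scale_right herm_scale_left uu
      by (simp add: power2_eq_square)
    hence c2: "(vnorm M w)\<^sup>2 = P" using herm_self_eq k2 N by simp
    have "herm M u w = of_real (k * N)" unfolding w_def herm_scale_right uu by simp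
    moreover have "k \<ge> 0" unfolding k_def using P N by simp
    ultimately have "cmod (herm M u w) = k * N" using N by (simp add: norm_mult)
    hence "(cmod (herm M u w))\<^sup>2 = k\<^sup>2 * N\<^sup>2" by (simp add: power_mult_distrib)
    also have "\<dots> = V" unfolding V_def k2 using True N by (simp add: power2_eq_square)
    finally show ?thesis using c1 c2 by auto
  next
    case False
    have rl: "\<rho>\<^sup>2 < 1"
    proof (rule ccontr)
      assume "\<not> \<rho>\<^sup>2 < 1"
      hence "N * P * 1 \<le> N * P * \<rho>\<^sup>2" using N P by (intro mult_left_mono) auto
      thus False using False feas by simp
    qed
    define e where "e = (if c = 0 then 1 else c / of_real (cmod c))"
    have ce: "cnj c * e = of_real (cmod c)"
      unfolding e_def using complex_norm_square[of c]
      by (auto simp: power2_eq_square field_simps)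
    have me: "cmod e = 1" unfolding e_def by (simp add: norm_divide)
    have ee: "cnj e * e = 1" using complex_norm_square[of e] me by (simp add: mult.commute)
    define z0 where "z0 = e * of_real (sqrt G)"
    define q where "q = sqrt (1 - \<rho>\<^sup>2)"
    have q0: "q > 0" unfolding q_def using rl by simp
    have q2: "q\<^sup>2 = 1 - \<rho>\<^sup>2" unfolding q_def using rl by simp
    define lam where "lam = sqrt (N * P - G) / (N * q)"
    define w where "w = (\<lambda>i. (z0 / of_real N) * v i + of_real lam * f i)"
    have vw: "herm M v w = z0" unfolding w_def herm_lin_right vf vv using N by simp
    have c1: "(cmod (herm M v w))\<^sup>2 \<ge> G" unfolding vw z0_def using G me by (simp add: norm_mult)
    have ff': "herm M f f = of_real (N * q\<^sup>2)" unfolding ff q2 by (simp add: algebra_simps)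
    have fw: "herm M f w = of_real (lam * N * q\<^sup>2)" unfolding w_def herm_lin_right fv ff' by simp
    have "herm M w w = cnj (z0 / of_real N) * z0 + of_real lam * of_real (lam * N * q\<^sup>2)"
      by (subst (1) w_def) (simp only: herm_lin_left vw fw, simp)
    also have "\<dots> = of_real (G / N + lam\<^sup>2 * N * q\<^sup>2)"
    proof -
      have "cnj z0 * z0 = (cnj e * e) * of_real (sqrt G * sqrt G)"
        by (simp only: z0_def complex_cnj_mult complex_cnj_complex_of_real of_real_mult mult_ac)
      also have "\<dots> = of_real G" using ee G by simp
      finally have zz: "cnj z0 * z0 = of_real G" .
      have "cnj (z0 / of_real N) * z0 = of_real (G / N)" using zz by simp
      thus ?thesis by (simp add: power2_eq_square)
    qed
    also have "G / N + lam\<^sup>2 * N * q\<^sup>2 = P"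
    proof -
      have "lam\<^sup>2 = (N * P - G) / (N * q)\<^sup>2" unfolding lam_def using feas
        by (simp add: power_divide)
      hence "lam\<^sup>2 * N * q\<^sup>2 = (N * P - G) / N" using N q0
        by (simp add: power2_eq_square field_simps)
      thus ?thesis using N by (simp add: field_simps)
    qed
    finally have c2: "(vnorm M w)\<^sup>2 = P" using herm_self_eq by blast
    have "herm M u w = of_real (lam * N * q\<^sup>2) + cnj c * z0 / of_real N" unfolding uw fw vw ..
    also have "cnj c * z0 = of_real (\<rho> * N * sqrt G)" unfolding z0_def
      using ce cc by (simp add: mult.assoc[symmetric])
    also have "lam * N * q\<^sup>2 = q * sqrt (N * P - G)" unfolding lam_def using N q0
      by (simp add: power2_eq_square)
    finally have "herm M u w = of_real V0" unfolding V0_def q_def using N by simp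
    hence "(cmod (herm M u w))\<^sup>2 = V" unfolding V_def V0_def[symmetric] using False V0nn by simp
    thus ?thesis using c1 c2 by auto
  qed
  show ?thesis using ub att by blast
qed

lemma vnorm_arr: "(vnorm M (arr_vec H x p))\<^sup>2 = real M"
  unfolding vnorm_sq arr_vec_def arr_resp_def by simp

lemma main_form:
  fixes M :: nat and H D x \<beta>\<^sub>0 \<sigma>2 Pmax \<Gamma> \<phi> :: real
  assumes M: "M \<ge> 1" and H: "H > 0" and D: "D > 0" and b0: "\<beta>\<^sub>0 > 0"
    and sig: "\<sigma>2 > 0" and P: "Pmax > 0" and G: "\<Gamma> > 0"
    and feas: "real M * Pmax / ((D - x)\<^sup>2 + H\<^sup>2) \<ge> \<Gamma>"
  shows
    "let au = arr_vec H x 0; av = arr_vec H x D;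
         hc = (\<lambda>i. of_real (sqrt (\<beta>\<^sub>0 / (x\<^sup>2 + H\<^sup>2))) * exp (\<i> * of_real \<phi>) * au i);
         \<gamma>0 = \<beta>\<^sub>0 / \<sigma>2;
         \<rho> = cmod (herm M au av) / (vnorm M au * vnorm M av);
         dv = (D - x)\<^sup>2 + H\<^sup>2;
         g = \<gamma>0 * dv * (\<rho> * sqrt \<Gamma> + sqrt (1 - \<rho>\<^sup>2) * sqrt (real M * Pmax / dv - \<Gamma>))\<^sup>2
               / (x\<^sup>2 + H\<^sup>2);
         \<gamma>opt = (if real M * Pmax * \<rho>\<^sup>2 / dv \<ge> \<Gamma>
                   then \<gamma>0 * Pmax * real M / (x\<^sup>2 + H\<^sup>2) else g)
     in Sup {(cmod (herm M hc w))\<^sup>2 / \<sigma>2 | w.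
               (cmod (herm M av w))\<^sup>2 / dv \<ge> \<Gamma> \<and> (vnorm M w)\<^sup>2 \<le> Pmax} = \<gamma>opt"
proof -
  define au where "au = arr_vec H x 0"
  define av where "av = arr_vec H x D"
  define dv where "dv = (D - x)\<^sup>2 + H\<^sup>2"
  define d0 where "d0 = x\<^sup>2 + H\<^sup>2"
  define N where "N = real M"
  define \<rho> where "\<rho> = cmod (herm M au av) / N"
  define K where "K = \<beta>\<^sub>0 / d0 / \<sigma>2"
  have dv0: "dv > 0" unfolding dv_def using H by (simp add: add_nonneg_pos)
  have d00: "d0 > 0" unfolding d0_def using H by (simp add: add_nonneg_pos)
  have N0: "N > 0" unfolding N_def using M by simp
  have un: "(vnorm M au)\<^sup>2 = N" unfolding au_def N_def by (rule vnorm_arr)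
  have vn: "(vnorm M av)\<^sup>2 = N" unfolding av_def N_def by (rule vnorm_arr)
  have vnu: "vnorm M au = sqrt N" using un vnorm_nonneg[of M au] by (metis real_sqrt_unique)
  have vnv: "vnorm M av = sqrt N" using vn vnorm_nonneg[of M av] by (metis real_sqrt_unique)
  have rho_eq: "cmod (herm M au av) / (vnorm M au * vnorm M av) = \<rho>"
    unfolding \<rho>_def vnu vnv using N0 by simp
  have GP: "\<Gamma> * dv \<le> N * Pmax" using feas dv0 unfolding N_def dv_def[symmetric]
    by (simp add: pos_le_divide_eq)
  have Gd: "\<Gamma> * dv > 0" using G dv0 by simp
  define V where "V = (if N * Pmax * \<rho>\<^sup>2 \<ge> \<Gamma> * dv then N * Pmax
                else (\<rho> * sqrt (\<Gamma> * dv) + sqrt (1 - \<rho>\<^sup>2) * sqrt (N * Pmax - \<Gamma> * dv))\<^sup>2)"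
  have AO: "(\<forall>w. (cmod (herm M av w))\<^sup>2 \<ge> \<Gamma> * dv \<and> (vnorm M w)\<^sup>2 \<le> Pmax \<longrightarrow> (cmod (herm M au w))\<^sup>2 \<le> V)
       \<and> (\<exists>w. (cmod (herm M av w))\<^sup>2 \<ge> \<Gamma> * dv \<and> (vnorm M w)\<^sup>2 \<le> Pmax \<and> (cmod (herm M au w))\<^sup>2 = V)"
    unfolding V_def \<rho>_def by (rule abstract_opt[OF N0 un vn P Gd GP])
  define hc where "hc = (\<lambda>i. of_real (sqrt (\<beta>\<^sub>0 / d0)) * exp (\<i> * of_real \<phi>) * au i)"
  have hcw: "(cmod (herm M hc w))\<^sup>2 / \<sigma>2 = K * (cmod (herm M au w))\<^sup>2" for w
  proof -
    have "herm M hc w = cnj (of_real (sqrt (\<beta>\<^sub>0 / d0)) * exp (\<i> * of_real \<phi>)) * herm M au w"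
      unfolding hc_def by (rule herm_scale_left)
    hence "cmod (herm M hc w) = sqrt (\<beta>\<^sub>0 / d0) * cmod (herm M au w)"
      using b0 d00 by (simp add: norm_mult)
    hence "(cmod (herm M hc w))\<^sup>2 = (\<beta>\<^sub>0 / d0) * (cmod (herm M au w))\<^sup>2"
      using b0 d00 by (simp add: power_mult_distrib)
    thus ?thesis unfolding K_def by simp
  qed
  have cons: "((cmod (herm M av w))\<^sup>2 / dv \<ge> \<Gamma>) = ((cmod (herm M av w))\<^sup>2 \<ge> \<Gamma> * dv)" for w
    using dv0 by (simp add: pos_le_divide_eq)
  define S where "S = {(cmod (herm M hc w))\<^sup>2 / \<sigma>2 | w.
               (cmod (herm M av w))\<^sup>2 / dv \<ge> \<Gamma> \<and> (vnorm M w)\<^sup>2 \<le> Pmax}"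
  have K0: "K > 0" unfolding K_def using b0 d00 sig by simp
  have SupS: "Sup S = K * V"
  proof (rule cSup_eq_maximum)
    obtain w where "(cmod (herm M av w))\<^sup>2 \<ge> \<Gamma> * dv" "(vnorm M w)\<^sup>2 \<le> Pmax" "(cmod (herm M au w))\<^sup>2 = V"
      using AO by blast
    thus "K * V \<in> S" unfolding S_def using hcw cons by force
  next
    fix y assume "y \<in> S"
    then obtain w where "y = K * (cmod (herm M au w))\<^sup>2" "(cmod (herm M av w))\<^sup>2 \<ge> \<Gamma> * dv"
      "(vnorm M w)\<^sup>2 \<le> Pmax" unfolding S_def using hcw cons by auto
    thus "y \<le> K * V" using AO K0 by (simp add: mult_left_mono)
  qed
  have cond: "(real M * Pmax * \<rho>\<^sup>2 / dv \<ge> \<Gamma>) = (N * Pmax * \<rho>\<^sup>2 \<ge> \<Gamma> * dv)"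
    unfolding N_def using dv0 by (simp add: pos_le_divide_eq)
  have gq: "(\<beta>\<^sub>0 / \<sigma>2) * dv * (\<rho> * sqrt \<Gamma> + sqrt (1 - \<rho>\<^sup>2) * sqrt (real M * Pmax / dv - \<Gamma>))\<^sup>2 / d0
      = K * (\<rho> * sqrt (\<Gamma> * dv) + sqrt (1 - \<rho>\<^sup>2) * sqrt (N * Pmax - \<Gamma> * dv))\<^sup>2"
  proof -
    have e1: "sqrt (\<Gamma> * dv) = sqrt \<Gamma> * sqrt dv" by (simp add: real_sqrt_mult)
    have "N * Pmax - \<Gamma> * dv = dv * (real M * Pmax / dv - \<Gamma>)" unfolding N_def using dv0
      by (simp add: field_simps)
    hence e2: "sqrt (N * Pmax - \<Gamma> * dv) = sqrt dv * sqrt (real M * Pmax / dv - \<Gamma>)"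
      by (simp add: real_sqrt_mult)
    have "(\<rho> * sqrt (\<Gamma> * dv) + sqrt (1 - \<rho>\<^sup>2) * sqrt (N * Pmax - \<Gamma> * dv))\<^sup>2
        = (sqrt dv)\<^sup>2 * (\<rho> * sqrt \<Gamma> + sqrt (1 - \<rho>\<^sup>2) * sqrt (real M * Pmax / dv - \<Gamma>))\<^sup>2"
      unfolding e1 e2 by (simp add: power_mult_distrib[symmetric] algebra_simps)
    also have "(sqrt dv)\<^sup>2 = dv" using dv0 by simp
    finally show ?thesis unfolding K_def by (simp add: mult.commute mult.left_commute)
  qed
  have final: "Sup S = (if real M * Pmax * \<rho>\<^sup>2 / dv \<ge> \<Gamma>
                   then (\<beta>\<^sub>0 / \<sigma>2) * Pmax * real M / d0 else
               (\<beta>\<^sub>0 / \<sigma>2) * dv * (\<rho> * sqrt \<Gamma> + sqrt (1 - \<rho>\<^sup>2) * sqrt (real M * Pmax / dv - \<Gamma>))\<^sup>2 / d0)"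
    unfolding SupS cond gq V_def by (simp add: K_def N_def mult_ac)
  have rho_eq': "cmod (herm M (arr_vec H x 0) (arr_vec H x D)) / (vnorm M (arr_vec H x 0) * vnorm M (arr_vec H x D)) = \<rho>"
    using rho_eq unfolding au_def av_def .
  show ?thesis unfolding Let_def rho_eq'
    using final unfolding S_def hc_def au_def av_def dv_def d0_def by simp
qed

theorem proposition1:
  fixes M :: nat and H D x \<beta>\<^sub>0 \<sigma>2 Pmax \<Gamma> \<phi> :: real
  assumes M: "M \<ge> 1" and H: "H > 0" and D: "D > 0" and b0: "\<beta>\<^sub>0 > 0"
    and sig: "\<sigma>2 > 0" and P: "Pmax > 0" and G: "\<Gamma> > 0"
    and feas: "real M * Pmax / ((D - x)\<^sup>2 + H\<^sup>2) \<ge> \<Gamma>"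
  shows
    "let au = arr_vec H x 0; av = arr_vec H x D;
         hc = (\<lambda>i. of_real (sqrt (\<beta>\<^sub>0 / (x\<^sup>2 + H\<^sup>2))) * exp (\<i> * of_real \<phi>) * au i);
         \<gamma>0 = \<beta>\<^sub>0 / \<sigma>2;
         \<rho> = cmod (herm M au av) / (vnorm M au * vnorm M av);
         dv = (D - x)\<^sup>2 + H\<^sup>2;
         g = \<gamma>0 * dv * (\<rho> * sqrt \<Gamma> + sqrt (1 - \<rho>\<^sup>2) * sqrt (real M * Pmax / dv - \<Gamma>))\<^sup>2
               / (x\<^sup>2 + H\<^sup>2);
         \<gamma>opt = (if real M * Pmax * \<rho>\<^sup>2 / dv \<ge> \<Gamma>
                   then \<gamma>0 * Pmax * real M / (x\<^sup>2 + H\<^sup>2) else g)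
     in Sup {(cmod (herm M hc w))\<^sup>2 / \<sigma>2 | w.
               (cmod (herm M av w))\<^sup>2 / dv \<ge> \<Gamma> \<and> (vnorm M w)\<^sup>2 \<le> Pmax} = \<gamma>opt"
  using assms by (rule main_form)

end
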